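(* Let $a:[0,\infty)\to[0,\infty)$ be non-negative and non-decreasing, and define its generalized inverse $a^{\leftarrow}(y)=\sup\{x\ge0:a(x)\le y\}$ for $y\ge a(0)$. Let $s\in\{1,2,\dots\}$, $\delta\in(0,1/2)$, and for $n=1,2,\dots$ let $S_s(n)=\sum_{k=0}^n\ln\bigl(1+\tfrac1{\sqrt s}a\bigl(\tfrac{k+1}{\sqrt s}\bigr)\bigr)$. Then $0\le S_s(n)-\sqrt s\int_0^{(n+1)/\sqrt s}\ln\bigl(1+\tfrac1{\sqrt s}a(x)\bigr)dx\le\tfrac12 s^{\delta-1/2}$ whenever $n+1<\sqrt s\,a^{\leftarrow}(s^\delta/2)$. Furthermore, let $A(x)=\int_0^x a^2(u)\,du$ for $x\ge0$. Unless $a\equiv0$, $A$ is continuous and strictly increasing from $0$ at $x_0:=\sup\{x\ge0:a(x)=0\}$ to $\infty$ as $x\to\infty$; and, with $A^{\leftarrow}(y)=\sup\{x\ge0:A(x)\le y\}$, $0\le\int_0^{(n+1)/\sqrt s}a(x)\,dx-\sqrt s\int_0^{(n+1)/\sqrt s}\ln\bigl(1+\tfrac1{\sqrt s}a(x)\bigr)dx\le\tfrac12 s^{-\delta}$ whenever $n+1<\sqrt s\,A^{\leftarrow}(s^{1/2-\delta})$. *)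

theory Defs
  imports "HOL-Analysis.Analysis"
begin

text \<open>Generalized inverse f^{<-}(y) = sup {x >= 0. f x <= y}, taken in the extended
  reals (it is +infinity when the set is unbounded, -infinity when it is empty).\<close>
definition gen_inv :: "(real \<Rightarrow> real) \<Rightarrow> real \<Rightarrow> ereal" where
  "gen_inv f y = Sup (ereal ` {x. 0 \<le> x \<and> f x \<le> y})"

end

theory Submission
  imports Defs
begin

lemma mono_int:
  fixes g :: "real \<Rightarrow> real"
  assumes "mono_on {0..} g" "0 \<le> u"
  shows "g integrable_on {u..v}"
proof -
  have "mono_on {u..v} g"
    using assms by (auto simp: mono_on_def)
  thus ?thesis by (rule integrable_on_mono_on)
qed

lemma int_bounds:
  fixes g :: "real \<Rightarrow> real"
  assumes m: "mono_on {0..} g" and "0 \<le> u" "u \<le> v"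
  shows "(v-u)*g u \<le> integral {u..v} g \<and> integral {u..v} g \<le> (v-u)*g v"
proof -
  have i: "g integrable_on {u..v}" using mono_int assms by blast
  have "integral {u..v} (\<lambda>x. g u) \<le> integral {u..v} g"
    by (rule integral_le) (use i assms in \<open>auto simp: mono_on_def\<close>)
  moreover have "integral {u..v} g \<le> integral {u..v} (\<lambda>x. g v)"
    by (rule integral_le) (use i assms in \<open>auto simp: mono_on_def\<close>)
  ultimately show ?thesis using assms by simp
qed

lemma int_split:
  fixes g :: "real \<Rightarrow> real"
  assumes m: "mono_on {0..} g" and "0 \<le> u" "u \<le> v"
  shows "integral {0..v} g = integral {0..u} g + integral {u..v} g"
  using Henstock_Kurzweil_Integration.integral_combine[of 0 u v g] mono_int[OF m, of 0 v] assms
  by simp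

lemma riemann:
  fixes g :: "real \<Rightarrow> real"
  assumes m: "mono_on {0..} g" and c: "0 < c"
  shows "(\<Sum>k=0..n. g (real k / c)) \<le> c * integral {0..real (n+1) / c} g
       \<and> c * integral {0..real (n+1) / c} g \<le> (\<Sum>k=0..n. g (real (k+1) / c))"
proof (induction n)
  case 0
  have b: "(1/c - 0)*g 0 \<le> integral {0..1/c} g \<and> integral {0..1/c} g \<le> (1/c - 0)*g (1/c)"
    using int_bounds[OF m, of 0 "1/c"] c by simp
  have "c * ((1/c - 0)*g 0) \<le> c * integral {0..1/c} g"
    using b c by (intro mult_left_mono) auto
  moreover have "c * integral {0..1/c} g \<le> c * ((1/c - 0)*g (1/c))"
    using b c by (intro mult_left_mono) auto
  ultimately show ?case using c by simp
next
  case (Suc n)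
  define u where "u = real (n+1) / c"
  define v where "v = real (Suc n + 1) / c"
  have u0: "0 \<le> u" using c by (simp add: u_def)
  have vu: "v - u = 1/c" using c by (simp add: u_def v_def field_simps)
  have uv: "u \<le> v" using vu c by (smt (verit) divide_pos_pos)
  have sp: "integral {0..v} g = integral {0..u} g + integral {u..v} g"
    using int_split[OF m u0 uv] .
  have b: "(v-u)*g u \<le> integral {u..v} g \<and> integral {u..v} g \<le> (v-u)*g v"
    using int_bounds[OF m u0 uv] .
  have "c * ((v-u)*g u) \<le> c * integral {u..v} g"
    using b c by (intro mult_left_mono) auto
  moreover have "c * integral {u..v} g \<le> c * ((v-u)*g v)"
    using b c by (intro mult_left_mono) auto
  ultimately have b2: "g u \<le> c * integral {u..v} g" "c * integral {u..v} g \<le> g v"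
    using c vu by auto
  have gu: "g (real (Suc n) / c) = g u" by (simp add: u_def)
  have gv: "g (real (Suc n + 1) / c) = g v" by (simp add: v_def)
  have "c * integral {0..v} g = c * integral {0..u} g + c * integral {u..v} g"
    using sp by (simp add: distrib_left)
  with Suc.IH b2 show ?case
    unfolding sum.atLeast0_atMost_Suc gu gv u_def[symmetric] v_def[symmetric]
    by linarith
qed

lemma ln_lower:
  fixes z :: real
  assumes z: "0 \<le> z"
  shows "z - z^2/2 \<le> ln (1+z)"
proof -
  let ?h = "\<lambda>w::real. ln (1+w) - w + w^2/2"
  have "?h 0 \<le> ?h z"
  proof (rule DERIV_nonneg_imp_nondecreasing[OF z])
    fix w :: real assume "0 \<le> w" "w \<le> z"
    hence w: "0 \<le> w" by simp
    have "(?h has_real_derivative (1/(1+w) - 1 + 2*w/2)) (at w)"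
      using w by (auto intro!: derivative_eq_intros)
    moreover have "1/(1+w) - 1 + 2*w/2 = w^2/(1+w)"
      using w by (simp add: field_simps power2_eq_square)
    moreover have "w^2/(1+w) \<ge> 0" using w by simp
    ultimately show "\<exists>y. DERIV ?h w :> y \<and> 0 \<le> y" by metis
  qed
  thus ?thesis by simp
qed

lemma gen_inv_lt:
  assumes c: "0 < c" and H: "ereal t < ereal c * gen_inv g y"
  shows "\<exists>x. 0 \<le> x \<and> g x \<le> y \<and> t / c < x"
proof -
  have "ereal (t / c) < gen_inv g y"
  proof (cases "gen_inv g y")
    case (real r)
    with H have "t < c * r" by simp
    hence "t / c < r" using c by (simp add: field_simps)
    thus ?thesis using real by simp
  next
    case PInf thus ?thesis by simp
  next
    case MInf with H c show ?thesis by simp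
  qed
  then obtain x where "x \<in> {x. 0 \<le> x \<and> g x \<le> y}" "ereal (t/c) < ereal x"
    unfolding gen_inv_def by (auto simp: less_Sup_iff)
  thus ?thesis by auto
qed

theorem lemmaE1:
  fixes a :: "real \<Rightarrow> real" and s :: nat and \<delta> :: real
  assumes nonneg: "\<And>x. 0 \<le> x \<Longrightarrow> 0 \<le> a x"
    and mono: "mono_on {0..} a"
    and s_pos: "1 \<le> s"
    and delta: "0 < \<delta>" "\<delta> < 1/2"
  shows
    "(\<forall>n::nat. 1 \<le> n \<longrightarrow>
        ereal (real (n + 1)) < ereal (sqrt (real s)) * gen_inv a (real s powr \<delta> / 2) \<longrightarrow>
        (let S = (\<Sum>k=0..n. ln (1 + a (real (k + 1) / sqrt (real s)) / sqrt (real s)));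
             I = sqrt (real s) * integral {0..real (n + 1) / sqrt (real s)}
                   (\<lambda>x. ln (1 + a x / sqrt (real s)))
         in 0 \<le> S - I \<and> S - I \<le> (1/2) * real s powr (\<delta> - 1/2)))
    \<and>
    (\<not> (\<forall>x\<ge>0. a x = 0) \<longrightarrow>
       (let A = (\<lambda>x. integral {0..x} (\<lambda>u. (a u)\<^sup>2));
            x0 = Sup ({x. 0 \<le> x \<and> a x = 0} \<union> {0})
        in continuous_on {0..} A \<and> A x0 = 0 \<and> strict_mono_on {x0..} A
           \<and> filterlim A at_top at_top))
    \<and>
    (\<forall>n::nat. 1 \<le> n \<longrightarrow>
        ereal (real (n + 1)) < ereal (sqrt (real s)) *
           gen_inv (\<lambda>x. integral {0..x} (\<lambda>u. (a u)\<^sup>2)) (real s powr (1/2 - \<delta>)) \<longrightarrow>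
        (let t = real (n + 1) / sqrt (real s);
             D = integral {0..t} a
                 - sqrt (real s) * integral {0..t} (\<lambda>x. ln (1 + a x / sqrt (real s)))
         in 0 \<le> D \<and> D \<le> (1/2) * real s powr (- \<delta>)))"
proof -
  obtain c where c_def: "c = sqrt (real s)" by blast
  have cpos: "0 < c" using s_pos by (simp add: c_def)
  have spos: "0 < real s" using s_pos by simp
  have cpow: "c = real s powr (1/2)" using spos by (simp add: c_def powr_half_sqrt)
  define f where "f = (\<lambda>x. ln (1 + a x / c))"
  have fmono: "mono_on {0..} f"
    unfolding mono_on_def f_def
  proof (intro allI impI)
    fix x y :: real assume "x \<in> {0..} \<and> y \<in> {0..} \<and> x \<le> y"
    hence xy: "0 \<le> x" "0 \<le> y" "a x \<le> a y" using mono by (auto simp: mono_on_def)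
    have "0 \<le> a x / c" using nonneg[OF xy(1)] cpos by simp
    moreover have "a x / c \<le> a y / c" using xy cpos by (simp add: divide_right_mono)
    ultimately show "ln (1 + a x / c) \<le> ln (1 + a y / c)" by simp
  qed
  define g where "g = (\<lambda>u. (a u)\<^sup>2)"
  have gmono: "mono_on {0..} g"
    unfolding mono_on_def g_def
  proof (intro allI impI)
    fix x y :: real assume "x \<in> {0..} \<and> y \<in> {0..} \<and> x \<le> y"
    hence xy: "0 \<le> x" "0 \<le> y" "a x \<le> a y" using mono by (auto simp: mono_on_def)
    show "(a x)\<^sup>2 \<le> (a y)\<^sup>2" using xy nonneg[OF xy(1)] by (simp add: power_mono)
  qed
  have P1: "\<forall>n::nat. 1 \<le> n \<longrightarrow>
        ereal (real (n + 1)) < ereal c * gen_inv a (real s powr \<delta> / 2) \<longrightarrow>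
        (let S = (\<Sum>k=0..n. f (real (k + 1) / c));
             I = c * integral {0..real (n + 1) / c} f
         in 0 \<le> S - I \<and> S - I \<le> (1/2) * real s powr (\<delta> - 1/2))"
  proof (intro allI impI)
    fix n :: nat
    assume H: "ereal (real (n + 1)) < ereal c * gen_inv a (real s powr \<delta> / 2)"
    obtain x where x: "0 \<le> x" "a x \<le> real s powr \<delta> / 2" "real (n+1) / c < x"
      using gen_inv_lt[OF cpos H] by blast
    have t0: "0 \<le> real (n+1) / c" using cpos by simp
    have at: "a (real (n+1) / c) \<le> real s powr \<delta> / 2"
      using mono x t0 by (smt (verit, best) atLeast_iff mono_on_def)
    have R: "(\<Sum>k=0..n. f (real k / c)) \<le> c * integral {0..real (n+1) / c} f
       \<and> c * integral {0..real (n+1) / c} f \<le> (\<Sum>k=0..n. f (real (k+1) / c))"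
      using riemann[OF fmono cpos] by blast
    have tel: "(\<Sum>k=0..n. f (real (k+1) / c)) - (\<Sum>k=0..n. f (real k / c))
               = f (real (Suc n) / c) - f (real 0 / c)"
      using sum_Suc_diff[of 0 n "\<lambda>i. f (real i / c)"] by (simp add: sum_subtractf)
    have f0: "0 \<le> f 0" unfolding f_def using nonneg[of 0] cpos by simp
    have fle: "f (real (n+1) / c) \<le> a (real (n+1) / c) / c"
      unfolding f_def
      by (rule ln_add_one_self_le_self) (use nonneg[OF t0] cpos in simp)
    have "a (real (n+1) / c) / c \<le> (real s powr \<delta> / 2) / c"
      by (rule divide_right_mono[OF at]) (use cpos in simp)
    also have "\<dots> = (1/2) * real s powr (\<delta> - 1/2)"
      unfolding cpow using spos by (simp add: powr_diff)
    finally have "f (real (n+1) / c) \<le> (1/2) * real s powr (\<delta> - 1/2)" using fle by linarith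
    then show "let S = (\<Sum>k=0..n. f (real (k + 1) / c));
             I = c * integral {0..real (n + 1) / c} f
         in 0 \<le> S - I \<and> S - I \<le> (1/2) * real s powr (\<delta> - 1/2)"
      unfolding Let_def using R tel f0 by simp
  qed
  have gnn: "\<And>u. 0 \<le> g u" unfolding g_def by simp
  have Amono: "\<And>u v. 0 \<le> u \<Longrightarrow> u \<le> v \<Longrightarrow>
      integral {0..u} g + (v-u) * g u \<le> integral {0..v} g"
  proof -
    fix u v :: real assume uv: "0 \<le> u" "u \<le> v"
    show "integral {0..u} g + (v-u) * g u \<le> integral {0..v} g"
      using int_split[OF gmono uv] int_bounds[OF gmono uv] by linarith
  qed
  have Anonneg: "\<And>u. 0 \<le> u \<Longrightarrow> 0 \<le> integral {0..u} g"
  proof -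
    fix u :: real assume u: "0 \<le> u"
    have "(u - 0) * g 0 \<le> integral {0..u} g" using int_bounds[OF gmono order_refl u] by blast
    moreover have "0 \<le> (u - 0) * g 0" using u gnn by simp
    ultimately show "0 \<le> integral {0..u} g" by linarith
  qed
  have P3: "\<forall>n::nat. 1 \<le> n \<longrightarrow>
        ereal (real (n + 1)) < ereal c * gen_inv (\<lambda>x. integral {0..x} g) (real s powr (1/2 - \<delta>)) \<longrightarrow>
        (let t = real (n + 1) / c;
             D = integral {0..t} a - c * integral {0..t} f
         in 0 \<le> D \<and> D \<le> (1/2) * real s powr (- \<delta>))"
  proof (intro allI impI)
    fix n :: nat
    assume H: "ereal (real (n + 1)) < ereal c * gen_inv (\<lambda>x. integral {0..x} g) (real s powr (1/2 - \<delta>))"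
    define t where "t = real (n + 1) / c"
    obtain x where x: "0 \<le> x" "integral {0..x} g \<le> real s powr (1/2 - \<delta>)" "t < x"
      using gen_inv_lt[OF cpos H] unfolding t_def by blast
    have t0: "0 \<le> t" using cpos by (simp add: t_def)
    have "integral {0..t} g + (x-t) * g t \<le> integral {0..x} g"
      using Amono[OF t0] x by simp
    moreover have "0 \<le> (x-t) * g t" using x gnn by simp
    ultimately have At: "integral {0..t} g \<le> real s powr (1/2 - \<delta>)" using x by linarith
    have ia: "a integrable_on {0..t}" using mono_int[OF mono] by simp
    have iff: "f integrable_on {0..t}" using mono_int[OF fmono] by simp
    have ig: "g integrable_on {0..t}" using mono_int[OF gmono] by simp
    have icf: "(\<lambda>x. c * f x) integrable_on {0..t}" by (rule integrable_on_mult_right[OF iff])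
    have Deq: "integral {0..t} a - c * integral {0..t} f = integral {0..t} (\<lambda>x. a x - c * f x)"
    proof -
      have e1: "integral {0..t} (\<lambda>x. a x - c * f x) = integral {0..t} a - integral {0..t} (\<lambda>x. c * f x)"
        by (rule Henstock_Kurzweil_Integration.integral_diff[OF ia icf])
      have e2: "c * integral {0..t} f = integral {0..t} (\<lambda>x. c * f x)"
        by (rule integral_mult[OF iff])
      show ?thesis using e1 e2 by linarith
    qed
    have idf: "(\<lambda>x. a x - c * f x) integrable_on {0..t}"
      by (rule Henstock_Kurzweil_Integration.integrable_diff[OF ia icf])
    have ig2: "(\<lambda>x. g x / (2*c)) integrable_on {0..t}" by (rule integrable_on_divide[OF ig])
    have pw: "0 \<le> a u - c * f u \<and> a u - c * f u \<le> g u / (2*c)" if u: "u \<in> {0..t}" for u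
    proof -
      have a0: "0 \<le> a u" using nonneg u by simp
      define z where "z = a u / c"
      have z0: "0 \<le> z" using a0 cpos by (simp add: z_def)
      have au: "a u = c * z" using cpos by (simp add: z_def)
      have l1: "ln (1+z) \<le> z" using ln_add_one_self_le_self[OF z0] .
      have l2: "z - z^2/2 \<le> ln (1+z)" using ln_lower[OF z0] .
      have fz: "f u = ln (1+z)" by (simp add: f_def z_def)
      have "c * ln (1+z) \<le> c * z" using l1 cpos by simp
      moreover have "c * (z - z^2/2) \<le> c * ln (1+z)" using l2 cpos by simp
      moreover have "g u / (2*c) = c * z^2 / 2" unfolding g_def au using cpos
        by (simp add: field_simps power2_eq_square)
      ultimately show ?thesis unfolding fz au by (simp add: algebra_simps)
    qed
    have D0: "0 \<le> integral {0..t} (\<lambda>x. a x - c * f x)"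
      by (rule Henstock_Kurzweil_Integration.integral_nonneg[OF idf]) (use pw in blast)
    have "integral {0..t} (\<lambda>x. a x - c * f x) \<le> integral {0..t} (\<lambda>x. g x / (2*c))"
      by (rule integral_le[OF idf ig2]) (use pw in blast)
    also have "\<dots> = integral {0..t} g / (2*c)"
      using integral_mult[OF ig, of "1/(2*c)"] by simp
    also have "\<dots> \<le> real s powr (1/2 - \<delta>) / (2*c)"
      by (rule divide_right_mono[OF At]) (use cpos in simp)
    also have "\<dots> = (1/2) * real s powr (- \<delta>)"
    proof -
      have e: "real s powr (1/2 - \<delta>) = real s powr (1/2) * real s powr (-\<delta>)"
        using powr_add[of "real s" "1/2" "-\<delta>"] by simp
      have ne: "real s powr (1/2) \<noteq> 0" using spos by simp
      show ?thesis unfolding cpow e using ne by simp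
    qed
    finally show "let t = real (n + 1) / c;
             D = integral {0..t} a - c * integral {0..t} f
         in 0 \<le> D \<and> D \<le> (1/2) * real s powr (- \<delta>)"
      unfolding Let_def t_def[symmetric] Deq using D0 by simp
  qed
  have P2: "\<not> (\<forall>x\<ge>0. a x = 0) \<longrightarrow>
       (let A = (\<lambda>x. integral {0..x} g);
            x0 = Sup ({x. 0 \<le> x \<and> a x = 0} \<union> {0})
        in continuous_on {0..} A \<and> A x0 = 0 \<and> strict_mono_on {x0..} A
           \<and> filterlim A at_top at_top)"
  proof
    assume "\<not> (\<forall>x\<ge>0. a x = 0)"
    then obtain x1 where x1: "0 \<le> x1" "a x1 \<noteq> 0" by blast
    have ax1: "0 < a x1" using x1 nonneg[OF x1(1)] by simp
    define Z where "Z = {x. 0 \<le> x \<and> a x = 0} \<union> {0::real}"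
    define x0 where "x0 = Sup Z"
    define A where "A = (\<lambda>x. integral {0..x} g)"
    have Zne: "Z \<noteq> {}" by (simp add: Z_def)
    have Zb: "\<forall>z\<in>Z. z \<le> x1"
    proof
      fix z assume z: "z \<in> Z"
      show "z \<le> x1"
      proof (rule ccontr)
        assume "\<not> z \<le> x1"
        hence "x1 \<le> z" "z \<noteq> 0" using x1 by auto
        hence "a x1 \<le> a z" "a z = 0" using z x1 mono unfolding Z_def mono_on_def by (auto, metis order.trans)
        thus False using ax1 by simp
      qed
    qed
    have bdd: "bdd_above Z" using Zb by (auto simp: bdd_above_def)
    have x0ge: "0 \<le> x0" unfolding x0_def by (rule cSup_upper[OF _ bdd]) (simp add: Z_def)
    have below: "a u = 0" if u: "0 \<le> u" "u < x0" for u
    proof -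
      obtain z where z: "z \<in> Z" "u < z" using u(2) less_cSup_iff[OF Zne bdd] unfolding x0_def by blast
      hence z2: "z \<noteq> 0" "0 \<le> z" "a z = 0" using u unfolding Z_def by auto
      have "a u \<le> a z" by (rule mono_onD[OF mono]) (use u z z2 in auto)
      thus ?thesis using nonneg[OF u(1)] \<open>a z = 0\<close> by simp
    qed
    have above: "0 < a u" if u: "x0 < u" for u
    proof (rule ccontr)
      assume "\<not> 0 < a u"
      hence "a u = 0" using nonneg[of u] u x0ge by simp
      hence "u \<in> Z" using u x0ge unfolding Z_def by auto
      hence "u \<le> x0" unfolding x0_def by (rule cSup_upper[OF _ bdd])
      thus False using u by simp
    qed
    have cont: "continuous_on {0..} A"
    proof -
      have "continuous (at x within {0..}) A" if x: "x \<in> {0..}" for x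
      proof -
        have "continuous_on {0..x+1} A"
          unfolding A_def by (rule indefinite_integral_continuous_1[OF mono_int[OF gmono]]) simp
        hence "continuous (at x within {0..x+1}) A"
          using x by (simp add: continuous_on_eq_continuous_within)
        moreover have "at x within {0..} = at x within {0..x+1}"
          by (rule at_within_nhd[where S="{x - 1 <..< x + 1}"]) auto
        ultimately show ?thesis by simp
      qed
      thus ?thesis by (simp add: continuous_on_eq_continuous_within)
    qed
    have A0: "A x0 = 0"
    proof -
      have "integral {0..x0} g = integral {0..x0} (\<lambda>u. 0)"
        by (rule integral_spike[of "{x0}"]) (auto simp: g_def below)
      thus ?thesis by (simp add: A_def)
    qed
    have sm: "strict_mono_on {x0..} A"
    proof (rule strict_mono_onI)
      fix x y assume xy: "x \<in> {x0..}" "y \<in> {x0..}" "x < y"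
      define m where "m = (x + y) / 2"
      have xm: "x \<le> m" "m \<le> y" "x0 < m" "m < y" using xy by (auto simp: m_def)
      have x0': "0 \<le> x" using xy x0ge by simp
      have m0: "0 \<le> m" using xm x0' by simp
      have "A x + (m - x) * g x \<le> A m" unfolding A_def using Amono[OF x0' xm(1)] .
      moreover have "A m + (y - m) * g m \<le> A y" unfolding A_def using Amono[OF m0 xm(2)] .
      moreover have "0 \<le> (m - x) * g x" using xm gnn by simp
      moreover have "0 < (y - m) * g m" using xm above[OF xm(3)] by (simp add: g_def)
      ultimately show "A x < A y" by linarith
    qed
    have lim: "filterlim A at_top at_top"
      unfolding filterlim_at_top eventually_at_top_linorder
    proof
      fix Q :: real
      define k where "k = g x1"
      have k: "0 < k" using ax1 by (simp add: k_def g_def)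
      show "\<exists>N. \<forall>x\<ge>N. Q \<le> A x"
      proof (intro exI allI impI)
        fix x assume x: "x1 + \<bar>Q\<bar> / k \<le> x"
        have xx: "x1 \<le> x" using x k by (smt (verit) divide_nonneg_pos abs_ge_zero)
        have "A x1 + (x - x1) * k \<le> A x" unfolding A_def k_def using Amono[OF x1(1) xx] .
        moreover have "0 \<le> A x1" unfolding A_def using Anonneg[OF x1(1)] .
        moreover have "\<bar>Q\<bar> \<le> (x - x1) * k"
        proof -
          have "\<bar>Q\<bar> / k \<le> x - x1" using x by simp
          thus ?thesis using k by (simp add: divide_le_eq)
        qed
        ultimately show "Q \<le> A x" by linarith
      qed
    qed
    show "let A = (\<lambda>x. integral {0..x} g);
            x0 = Sup ({x. 0 \<le> x \<and> a x = 0} \<union> {0})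
        in continuous_on {0..} A \<and> A x0 = 0 \<and> strict_mono_on {x0..} A
           \<and> filterlim A at_top at_top"
      unfolding Let_def A_def[symmetric] Z_def[symmetric] x0_def[symmetric]
      using cont A0 sm lim by blast
  qed
  have sc: "sqrt (real s) = c" using c_def by simp
  show ?thesis
    using P1 P2 P3 unfolding sc f_def g_def by blast
qed

end
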